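(* Let $r>1$ and let $k,\ell,m$ be positive integers with $m\ge 12r$. Let $x_0\in R_1\cup\dots\cup R_\ell$ be an arbitrary reservoir vertex of the $(k,\ell,m)$-megastar and run the Moran process with fitness $r$ on the megastar with initial mutant $x_0$. Then the process goes extinct with probability at least $1/(26r^2\ell)$.
   Context: Moran process: given a directed graph $G$ and fitness $r$, one vertex $x_0$ is a mutant, the rest non-mutants. At each step a vertex $v$ is chosen with probability proportional to fitness (mutants $r$, non-mutants $1$), an out-neighbour $w$ of $v$ is chosen uniformly at random and the state of $v$ is copied to $w$. Extinction: eventually no vertex is a mutant. The $(k,\ell,m)$-megastar: disjoint union of reservoirs $R_1,\dots,R_\ell$ (size $m$), cliques $K_1,\dots,K_\ell$ (size $k$), feeders $a_1,\dots,a_\ell$, and centre $v^*$; edges from $v^*$ to all reservoir vertices, from each vertex of $R_i$ to $a_i$, from $a_i$ to each vertex of $K_i$, both directions between distinct vertices of each $K_i$, and from every clique vertex to $v^*$. *)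

theory Defs
  imports Complex_Main
begin

text \<open>A directed graph is given by a finite vertex set V and an edge set E.
  States of the Moran process are the sets of mutant vertices S \<subseteq> V.\<close>

definition out_nbrs :: "('a \<times> 'a) set \<Rightarrow> 'a \<Rightarrow> 'a set" where
  "out_nbrs E v = {w. (v, w) \<in> E}"

definition fitness :: "real \<Rightarrow> 'a set \<Rightarrow> 'a \<Rightarrow> real" where
  "fitness r S v = (if v \<in> S then r else 1)"

definition total_fitness :: "'a set \<Rightarrow> real \<Rightarrow> 'a set \<Rightarrow> real" where
  "total_fitness V r S = (\<Sum>v\<in>V. fitness r S v)"

definition moran_update :: "'a set \<Rightarrow> 'a \<Rightarrow> 'a \<Rightarrow> 'a set" where
  "moran_update S v w = (if v \<in> S then insert w S else S - {w})"

definition moran_trans :: "'a set \<Rightarrow> ('a \<times> 'a) set \<Rightarrow> real \<Rightarrow> 'a set \<Rightarrow> 'a set \<Rightarrow> real" where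
  "moran_trans V E r S S' =
     (\<Sum>v\<in>V. \<Sum>w\<in>out_nbrs E v.
        (if moran_update S v w = S' then
           (fitness r S v / total_fitness V r S) * (1 / real (card (out_nbrs E v)))
         else 0))"

fun moran_ext_within :: "'a set \<Rightarrow> ('a \<times> 'a) set \<Rightarrow> real \<Rightarrow> nat \<Rightarrow> 'a set \<Rightarrow> real" where
  "moran_ext_within V E r 0 S = (if S = {} then 1 else 0)"
| "moran_ext_within V E r (Suc n) S =
     (\<Sum>S'\<in>Pow V. moran_trans V E r S S' * moran_ext_within V E r n S')"

definition moran_extinction :: "'a set \<Rightarrow> ('a \<times> 'a) set \<Rightarrow> real \<Rightarrow> 'a set \<Rightarrow> real" where
  "moran_extinction V E r S = (SUP n. moran_ext_within V E r n S)"

text \<open>Indices are 0-based: reservoirs R_i = {Res i j | j < m}, cliques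
  K_i = {Cl i j | j < k}, feeders Feeder i, for i < l; Centre is v*.\<close>
datatype mvert = Centre | Res nat nat | Feeder nat | Cl nat nat

definition megastar_V :: "nat \<Rightarrow> nat \<Rightarrow> nat \<Rightarrow> mvert set" where
  "megastar_V k l m =
     {Centre} \<union> {Res i j | i j. i < l \<and> j < m} \<union> {Feeder i | i. i < l}
     \<union> {Cl i j | i j. i < l \<and> j < k}"

definition megastar_E :: "nat \<Rightarrow> nat \<Rightarrow> nat \<Rightarrow> (mvert \<times> mvert) set" where
  "megastar_E k l m =
     {(Centre, Res i j) | i j. i < l \<and> j < m}
     \<union> {(Res i j, Feeder i) | i j. i < l \<and> j < m}
     \<union> {(Feeder i, Cl i j) | i j. i < l \<and> j < k}
     \<union> {(Cl i j, Cl i j') | i j j'. i < l \<and> j < k \<and> j' < k \<and> j \<noteq> j'}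
     \<union> {(Cl i j, Centre) | i j. i < l \<and> j < k}"

end

theory Submission
  imports Defs
begin


definition cc :: "'a set \<Rightarrow> ('a \<times> 'a) set \<Rightarrow> real \<Rightarrow> 'a set \<Rightarrow> 'a \<Rightarrow> 'a \<Rightarrow> real" where
  "cc V E r S v w = (fitness r S v / total_fitness V r S) * (1 / real (card (out_nbrs E v)))"

lemma trans_cc: "moran_trans V E r S S' =
  (\<Sum>v\<in>V. \<Sum>w\<in>out_nbrs E v. (if moran_update S v w = S' then cc V E r S v w else 0))"
  unfolding moran_trans_def cc_def by simp

locale mgen =
  fixes V :: "'a set" and E and r :: real
  assumes finV: "finite V" and neV: "V \<noteq> {}" and rpos: "r > 0"
    and finO: "\<And>v. v \<in> V \<Longrightarrow> finite (out_nbrs E v)"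
    and neO: "\<And>v. v \<in> V \<Longrightarrow> out_nbrs E v \<noteq> {}"
begin

lemma fit_pos: "fitness r S v > 0"
  using rpos by (simp add: fitness_def)

lemma tf_pos: "total_fitness V r S > 0"
  unfolding total_fitness_def using finV neV by (intro sum_pos) (auto simp: fit_pos)

lemma cc_nonneg: "cc V E r S v w \<ge> 0"
  unfolding cc_def using fit_pos[of S v] tf_pos[of S] by simp

lemma inner_total: "v \<in> V \<Longrightarrow> (\<Sum>w\<in>out_nbrs E v. cc V E r S v w) = fitness r S v / total_fitness V r S"
proof -
  assume v: "v \<in> V"
  have c: "card (out_nbrs E v) > 0" using finO[OF v] neO[OF v] by (simp add: card_gt_0_iff)
  show ?thesis unfolding cc_def using c by simp
qed

lemma total_one: "(\<Sum>v\<in>V. \<Sum>w\<in>out_nbrs E v. cc V E r S v w) = 1"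
proof -
  have "(\<Sum>v\<in>V. \<Sum>w\<in>out_nbrs E v. cc V E r S v w) = (\<Sum>v\<in>V. fitness r S v / total_fitness V r S)"
    by (rule sum.cong) (auto simp: inner_total)
  also have "\<dots> = total_fitness V r S / total_fitness V r S"
    by (simp add: total_fitness_def sum_divide_distrib[symmetric])
  also have "\<dots> = 1" using tf_pos[of S] by simp
  finally show ?thesis .
qed

lemma trans_nonneg: "moran_trans V E r S S' \<ge> 0"
  unfolding trans_cc by (intro sum_nonneg) (auto simp: cc_nonneg)

lemma rowsum_le: "(\<Sum>S'\<in>Pow V. moran_trans V E r S S') \<le> 1"
proof -
  have "(\<Sum>S'\<in>Pow V. moran_trans V E r S S') =
     (\<Sum>v\<in>V. \<Sum>w\<in>out_nbrs E v. \<Sum>S'\<in>Pow V. (if moran_update S v w = S' then cc V E r S v w else 0))"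
    unfolding trans_cc
    by (subst sum.swap) (simp add: sum.swap[of _ "Pow V"])
  also have "\<dots> = (\<Sum>v\<in>V. \<Sum>w\<in>out_nbrs E v. (if moran_update S v w \<in> Pow V then cc V E r S v w else 0))"
    using finV by (simp add: sum.delta)
  also have "\<dots> \<le> (\<Sum>v\<in>V. \<Sum>w\<in>out_nbrs E v. cc V E r S v w)"
    by (intro sum_mono) (auto simp: cc_nonneg)
  also have "\<dots> = 1" by (rule total_one)
  finally show ?thesis .
qed

lemma ext_bounds: "0 \<le> moran_ext_within V E r n S \<and> moran_ext_within V E r n S \<le> 1"
proof (induction n arbitrary: S)
  case 0 then show ?case by simp
next
  case (Suc n)
  have "moran_ext_within V E r (Suc n) S \<le> (\<Sum>S'\<in>Pow V. moran_trans V E r S S')"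
    using Suc trans_nonneg by (simp add: sum_mono mult_left_le)
  also have "\<dots> \<le> 1" by (rule rowsum_le)
  finally show ?case using Suc trans_nonneg by (simp add: sum_nonneg)
qed

definition DD where "DD S = (\<Sum>v\<in>V. \<Sum>w\<in>out_nbrs E v. (if moran_update S v w \<noteq> S then cc V E r S v w else 0))"

lemma stay: "moran_trans V E r S S = 1 - DD S"
proof -
  have "moran_trans V E r S S + DD S = (\<Sum>v\<in>V. \<Sum>w\<in>out_nbrs E v. cc V E r S v w)"
    unfolding trans_cc DD_def sum.distrib[symmetric] by (intro sum.cong) auto
  then show ?thesis using total_one by simp
qed

lemma trans_ge_single: "v0 \<in> V \<Longrightarrow> w0 \<in> out_nbrs E v0 \<Longrightarrow> moran_update S v0 w0 = S' \<Longrightarrow>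
   moran_trans V E r S S' \<ge> cc V E r S v0 w0"
proof -
  assume a: "v0 \<in> V" "w0 \<in> out_nbrs E v0" "moran_update S v0 w0 = S'"
  have "cc V E r S v0 w0 \<le> (\<Sum>w\<in>out_nbrs E v0. (if moran_update S v0 w = S' then cc V E r S v0 w else 0))"
    using member_le_sum[of w0 "out_nbrs E v0" "\<lambda>w. (if moran_update S v0 w = S' then cc V E r S v0 w else 0)"]
      a finO[OF a(1)] cc_nonneg by auto
  also have "\<dots> \<le> moran_trans V E r S S'"
    unfolding trans_cc
    by (rule member_le_sum[OF a(1)]) (auto intro: sum_nonneg simp: cc_nonneg finV)
  finally show ?thesis .
qed

lemma trans_ge_set: "A \<subseteq> V \<Longrightarrow> (\<And>v w. v \<in> A \<Longrightarrow> w \<in> out_nbrs E v \<Longrightarrow> moran_update S v w = S') \<Longrightarrow>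
   moran_trans V E r S S' \<ge> (\<Sum>v\<in>A. fitness r S v / total_fitness V r S)"
proof -
  assume A: "A \<subseteq> V" and u: "\<And>v w. v \<in> A \<Longrightarrow> w \<in> out_nbrs E v \<Longrightarrow> moran_update S v w = S'"
  have "(\<Sum>v\<in>A. fitness r S v / total_fitness V r S) =
     (\<Sum>v\<in>A. \<Sum>w\<in>out_nbrs E v. (if moran_update S v w = S' then cc V E r S v w else 0))"
    using A u by (intro sum.cong) (auto simp: inner_total[symmetric])
  also have "\<dots> \<le> moran_trans V E r S S'"
    unfolding trans_cc using A finV
    by (intro sum_mono2) (auto intro: sum_nonneg simp: cc_nonneg)
  finally show ?thesis .
qed

lemma DD_eq: "B \<subseteq> V \<Longrightarrow> (\<And>v w. v \<in> V - B \<Longrightarrow> w \<in> out_nbrs E v \<Longrightarrow> moran_update S v w = S) \<Longrightarrow>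
  DD S = (\<Sum>v\<in>B. \<Sum>w\<in>out_nbrs E v. (if moran_update S v w \<noteq> S then cc V E r S v w else 0))"
  unfolding DD_def using finV
  by (intro sum.mono_neutral_right) auto

lemma h_le: "v \<in> V \<Longrightarrow> (\<Sum>w\<in>out_nbrs E v. (if moran_update S v w \<noteq> S then cc V E r S v w else 0))
   \<le> fitness r S v / total_fitness V r S"
  by (subst inner_total[symmetric]) (auto intro!: sum_mono simp: cc_nonneg)

lemma ext_empty: "moran_ext_within V E r n {} = 1"
proof (induction n)
  case 0 then show ?case by simp
next
  case (Suc n)
  have D: "DD {} = 0" unfolding DD_def by (simp add: moran_update_def)
  have "moran_ext_within V E r (Suc n) {} \<ge> moran_trans V E r {} {} * moran_ext_within V E r n {}"
    by simp (rule member_le_sum, auto intro: mult_nonneg_nonneg trans_nonneg simp: ext_bounds finV)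
  then have "moran_ext_within V E r (Suc n) {} \<ge> 1" using Suc D stay by simp
  then show ?case using ext_bounds[of "Suc n" "{}"] by simp
qed

end



lemma Res_img: "{Res i j | i j. i < l \<and> j < m} = (\<lambda>p. Res (fst p) (snd p)) ` ({..<l}\<times>{..<m})"
  by (auto simp: image_iff)

lemma Cl_img: "{Cl i j | i j. i < l \<and> j < k} = (\<lambda>p. Cl (fst p) (snd p)) ` ({..<l}\<times>{..<k})"
  by (auto simp: image_iff)

lemma Fe_img: "{Feeder i | i. i < l} = Feeder ` {..<l}"
  by auto

lemma finV: "finite (megastar_V k l m)"
  unfolding megastar_V_def Res_img Cl_img Fe_img by auto

lemma E_sub: "(v,w) \<in> megastar_E k l m \<Longrightarrow> v \<in> megastar_V k l m \<and> w \<in> megastar_V k l m"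
  unfolding megastar_E_def megastar_V_def by auto

lemma out_sub: "out_nbrs (megastar_E k l m) v \<subseteq> megastar_V k l m"
  using E_sub unfolding out_nbrs_def by auto

lemma out_Centre: "out_nbrs (megastar_E k l m) Centre = {Res i j | i j. i < l \<and> j < m}"
  unfolding out_nbrs_def megastar_E_def by auto

lemma card_out_Centre: "card (out_nbrs (megastar_E k l m) Centre) = l * m"
  unfolding out_Centre Res_img by (subst card_image) (auto simp: inj_on_def)

lemma out_Res: "i < l \<Longrightarrow> j < m \<Longrightarrow> out_nbrs (megastar_E k l m) (Res i j) = {Feeder i}"
  unfolding out_nbrs_def megastar_E_def by auto

lemma out_Res': "out_nbrs (megastar_E k l m) (Res i j) \<subseteq> {Feeder i}"
  unfolding out_nbrs_def megastar_E_def by auto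

lemma out_Feeder: "out_nbrs (megastar_E k l m) (Feeder i) \<subseteq> Cl i ` {..<k}"
  unfolding out_nbrs_def megastar_E_def by auto

lemma out_Cl: "out_nbrs (megastar_E k l m) (Cl i j) \<subseteq> {Centre} \<union> Cl i ` {..<k}"
  unfolding out_nbrs_def megastar_E_def by auto
lemma neO: "0 < k \<Longrightarrow> 0 < l \<Longrightarrow> 0 < m \<Longrightarrow> v \<in> megastar_V k l m \<Longrightarrow> out_nbrs (megastar_E k l m) v \<noteq> {}"
proof (cases v)
  case Centre
  assume "0 < l" "0 < m" then have "Res 0 0 \<in> out_nbrs (megastar_E k l m) v" 
    unfolding Centre out_Centre by simp
  then show ?thesis by auto
next
  case (Res i j)
  assume "v \<in> megastar_V k l m" then have "i < l" "j < m" unfolding Res megastar_V_def by auto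
  then show ?thesis unfolding Res by (simp add: out_Res)
next
  case (Feeder i)
  assume "v \<in> megastar_V k l m" "0 < k" then have "i < l" "0 < k" unfolding Feeder megastar_V_def by auto
  then have "Cl i 0 \<in> out_nbrs (megastar_E k l m) v" unfolding Feeder out_nbrs_def megastar_E_def by simp
  then show ?thesis by auto
next
  case (Cl i j)
  assume "v \<in> megastar_V k l m" then have "i < l" "j < k" unfolding Cl megastar_V_def by auto
  then have "Centre \<in> out_nbrs (megastar_E k l m) v" unfolding Cl out_nbrs_def megastar_E_def by simp
  then show ?thesis by auto
qed

lemma mgen: "0 < k \<Longrightarrow> 0 < l \<Longrightarrow> 0 < m \<Longrightarrow> 0 < r \<Longrightarrow> mgen (megastar_V k l m) (megastar_E k l m) r"
  apply unfold_locales
  using finV apply blast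
  apply (simp add: megastar_V_def)
  apply simp
  apply (rule finite_subset[OF out_sub finV])
  by (rule neO)



lemma Res_in_out: "Res i' j' \<in> out_nbrs (megastar_E k l m) v \<Longrightarrow> v = Centre"
  unfolding out_nbrs_def megastar_E_def by auto

lemma Feeder_in_out: "Feeder i' \<in> out_nbrs (megastar_E k l m) v \<Longrightarrow> \<exists>j'. v = Res i' j' \<and> j' < m"
  unfolding out_nbrs_def megastar_E_def by auto

context
  fixes k l m i j :: nat and r :: real
  assumes k: "0 < k" and l: "0 < l" and m: "0 < m" and r: "1 < r" and i: "i < l" and j: "j < m"
begin

abbreviation "VV \<equiv> megastar_V k l m"
abbreviation "EE \<equiv> megastar_E k l m"

lemma G: "mgen VV EE r" using mgen k l m r by simp

lemma xV: "Res i j \<in> VV" using i j by (simp add: megastar_V_def)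
lemma aV: "Feeder i \<in> VV" using i by (simp add: megastar_V_def)
lemma cV: "Centre \<in> VV" by (simp add: megastar_V_def)
lemma x_out: "Res i j \<in> out_nbrs EE Centre" using i j by (simp add: out_Centre)

lemma cc_Centre: "Centre \<notin> S \<Longrightarrow> cc VV EE r S Centre (Res i j) = (1 / total_fitness VV r S) * (1 / (real l * real m))"
  unfolding cc_def card_out_Centre by (simp add: fitness_def)

lemma T1: "moran_trans VV EE r {Res i j} {} \<ge> (1 / total_fitness VV r {Res i j}) * (1 / (real l * real m))"
  using mgen.trans_ge_single[OF G cV x_out, of "{Res i j}" "{}"] cc_Centre[of "{Res i j}"]
  by (simp add: moran_update_def)

lemma T6: "moran_trans VV EE r {Feeder i, Res i j} {Feeder i} \<ge> (1 / total_fitness VV r {Feeder i, Res i j}) * (1 / (real l * real m))"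
  using mgen.trans_ge_single[OF G cV x_out, of "{Feeder i, Res i j}" "{Feeder i}"] cc_Centre[of "{Feeder i, Res i j}"]
  by (simp add: moran_update_def insert_Diff_if)

lemma T2: "moran_trans VV EE r {Res i j} {Feeder i, Res i j} \<ge> r / total_fitness VV r {Res i j}"
proof -
  have "moran_trans VV EE r {Res i j} {Feeder i, Res i j} \<ge> (\<Sum>v\<in>{Res i j}. fitness r {Res i j} v / total_fitness VV r {Res i j})"
    by (rule mgen.trans_ge_set[OF G]) (use xV i j in \<open>auto simp: out_Res moran_update_def\<close>)
  then show ?thesis by (simp add: fitness_def)
qed

abbreviation "AA \<equiv> Res i ` ({..<m} - {j})"

lemma AV: "AA \<subseteq> VV" using i by (auto simp: megastar_V_def)
lemma cardA: "real (card AA) = real m - 1"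
proof -
  have "card AA = card ({..<m} - {j})" by (rule card_image) (auto simp: inj_on_def)
  also have "\<dots> = m - 1" using j by simp
  finally show ?thesis using m by simp
qed

lemma T4: "moran_trans VV EE r {Feeder i, Res i j} {Res i j} \<ge> (real m - 1) / total_fitness VV r {Feeder i, Res i j}"
proof -
  have "moran_trans VV EE r {Feeder i, Res i j} {Res i j} \<ge> (\<Sum>v\<in>AA. fitness r {Feeder i, Res i j} v / total_fitness VV r {Feeder i, Res i j})"
    by (rule mgen.trans_ge_set[OF G AV]) (use i j in \<open>auto simp: out_Res moran_update_def\<close>)
  also have "(\<Sum>v\<in>AA. fitness r {Feeder i, Res i j} v / total_fitness VV r {Feeder i, Res i j})
     = (\<Sum>v\<in>AA. 1 / total_fitness VV r {Feeder i, Res i j})"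
    by (rule sum.cong) (auto simp: fitness_def)
  also have "\<dots> = (real m - 1) / total_fitness VV r {Feeder i, Res i j}"
    using cardA by simp
  finally show ?thesis .
qed

abbreviation "hh S v \<equiv> (\<Sum>w\<in>out_nbrs EE v. (if moran_update S v w \<noteq> S then cc VV EE r S v w else 0))"

lemma hCentre: "Centre \<notin> S \<Longrightarrow> S \<inter> out_nbrs EE Centre = {Res i j} \<Longrightarrow>
   hh S Centre = (1 / total_fitness VV r S) * (1 / (real l * real m))"
proof -
  assume C: "Centre \<notin> S" and SI: "S \<inter> out_nbrs EE Centre = {Res i j}"
  have "hh S Centre = (\<Sum>w\<in>out_nbrs EE Centre. (if w = Res i j then cc VV EE r S Centre w else 0))"
  proof (rule sum.cong)
    fix w assume w: "w \<in> out_nbrs EE Centre"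
    have "(moran_update S Centre w \<noteq> S) = (w = Res i j)"
      using C SI w by (auto simp: moran_update_def)
    then show "(if moran_update S Centre w \<noteq> S then cc VV EE r S Centre w else 0) =
      (if w = Res i j then cc VV EE r S Centre w else 0)" by simp
  qed simp
  also have "\<dots> = cc VV EE r S Centre (Res i j)"
    using x_out mgen.finO[OF G cV] by (simp add: sum.delta)
  finally show ?thesis using cc_Centre C by simp
qed

lemma T3: "mgen.DD VV EE r {Res i j} \<le> (r + 1 / (real l * real m)) / total_fitness VV r {Res i j}"
proof -
  have "mgen.DD VV EE r {Res i j} = (\<Sum>v\<in>{Res i j, Centre}. hh {Res i j} v)"
  proof (rule mgen.DD_eq[OF G])
    show "{Res i j, Centre} \<subseteq> VV" using xV cV by simp
    fix v w assume v: "v \<in> VV - {Res i j, Centre}" and w: "w \<in> out_nbrs EE v"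
    have "w \<noteq> Res i j" using v w Res_in_out by blast
    then show "moran_update {Res i j} v w = {Res i j}" using v by (auto simp: moran_update_def)
  qed
  also have "\<dots> = hh {Res i j} (Res i j) + hh {Res i j} Centre" by simp
  also have "\<dots> \<le> r / total_fitness VV r {Res i j} + (1 / total_fitness VV r {Res i j}) * (1 / (real l * real m))"
    using mgen.h_le[OF G xV, of "{Res i j}"] hCentre[of "{Res i j}"] x_out
    by (simp add: fitness_def)
  finally show ?thesis by (simp add: add_divide_distrib algebra_simps)
qed

lemma T5: "mgen.DD VV EE r {Feeder i, Res i j} \<le> (real m - 1 + r + 1 / (real l * real m)) / total_fitness VV r {Feeder i, Res i j}"
proof -
  let ?S = "{Feeder i, Res i j}"
  let ?W = "total_fitness VV r ?S"
  have "mgen.DD VV EE r ?S = (\<Sum>v\<in>insert (Feeder i) (insert Centre AA). hh ?S v)"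
  proof (rule mgen.DD_eq[OF G])
    show "insert (Feeder i) (insert Centre AA) \<subseteq> VV" using aV cV AV by simp
    fix v w assume v: "v \<in> VV - insert (Feeder i) (insert Centre AA)" and w: "w \<in> out_nbrs EE v"
    have "w \<noteq> Res i j" using v w Res_in_out by blast
    moreover have "v \<noteq> Res i j \<Longrightarrow> w \<noteq> Feeder i"
    proof
      assume "v \<noteq> Res i j" "w = Feeder i"
      then obtain j' where "v = Res i j'" "j' < m" using w Feeder_in_out by blast
      then show False using v \<open>v \<noteq> Res i j\<close> by auto
    qed
    moreover have "v = Res i j \<Longrightarrow> w = Feeder i" using w i j by (simp add: out_Res)
    ultimately show "moran_update ?S v w = ?S" using v by (auto simp: moran_update_def)
  qed
  also have "\<dots> = hh ?S (Feeder i) + hh ?S Centre + (\<Sum>v\<in>AA. hh ?S v)"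
  proof -
    have f: "finite AA" by simp
    have n1: "Centre \<notin> AA" and n2: "Feeder i \<notin> insert Centre AA" by auto
    show ?thesis using sum.insert[OF finite.insertI[OF f] n2, of "hh ?S"] sum.insert[OF f n1, of "hh ?S"]
      by (simp only: add.assoc)
  qed
  also have "\<dots> \<le> r / ?W + (1 / ?W) * (1 / (real l * real m)) + (\<Sum>v\<in>AA. 1 / ?W)"
  proof (intro add_mono)
    show "hh ?S (Feeder i) \<le> r / ?W" using mgen.h_le[OF G aV, of ?S] by (simp add: fitness_def)
    have "?S \<inter> out_nbrs EE Centre = {Res i j}" using x_out by (auto simp: out_Centre)
    then show "hh ?S Centre \<le> (1 / ?W) * (1 / (real l * real m))" using hCentre[of ?S] by simp
    show "(\<Sum>v\<in>AA. hh ?S v) \<le> (\<Sum>v\<in>AA. 1 / ?W)"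
    proof (rule sum_mono)
      fix v assume "v \<in> AA"
      then have "v \<in> VV" "v \<notin> ?S" using AV by auto
      then show "hh ?S v \<le> 1 / ?W" using mgen.h_le[OF G, of v ?S] by (simp add: fitness_def)
    qed
  qed
  also have "\<dots> = (real m - 1 + r + 1 / (real l * real m)) / ?W"
    using cardA by (simp add: add_divide_distrib)
  finally show ?thesis .
qed

end



lemma (in mgen) ext_ge_sub: "T \<subseteq> Pow V \<Longrightarrow>
  (\<Sum>S'\<in>T. moran_trans V E r S S' * moran_ext_within V E r n S') \<le> moran_ext_within V E r (Suc n) S"
  using finV by simp (rule sum_mono2, auto intro: mult_nonneg_nonneg trans_nonneg simp: ext_bounds)

lemma (in mgen) row_sub: "T \<subseteq> Pow V \<Longrightarrow> (\<Sum>S'\<in>T. moran_trans V E r S S') \<le> 1"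
  using finV rowsum_le[of S] sum_mono2[of "Pow V" T "moran_trans V E r S"] trans_nonneg by fastforce

lemma step1:
  fixes p q s D dd a b e1 e2 c g t \<rho> :: real
  assumes "p \<ge> a" "q \<ge> b" "s = 1 - D" "D \<le> dd" "p + q + s \<le> 1" "q \<ge> 0" "s \<ge> 0"
    "e2 \<ge> g - t" "e1 \<ge> c - t" "t \<ge> 0" "a + b*g - dd*c \<ge> 0" "c \<ge> 0" "g \<ge> 0" "1 - a \<le> \<rho>"
  shows "p * 1 + q * e2 + s * e1 \<ge> c - \<rho> * t"
proof -
  have h1: "q * e2 \<ge> q * g - q * t" using assms mult_left_mono[of "g - t" e2 q] by (simp add: algebra_simps)
  have h2: "s * e1 \<ge> s * c - s * t" using assms mult_left_mono[of "c - t" e1 s] by (simp add: algebra_simps)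
  have h3: "q * g \<ge> b * g" using assms by (simp add: mult_right_mono)
  have h4: "s * c = c - D * c" unfolding assms(3) by (simp add: algebra_simps)
  have h5: "D * c \<le> dd * c" using assms by (simp add: mult_right_mono)
  have h6: "q * t + s * t \<le> \<rho> * t" using assms mult_right_mono[of "q + s" \<rho> t] by (simp add: algebra_simps)
  show ?thesis using h1 h2 h3 h4 h5 h6 assms(1) assms(11) by linarith
qed

lemma step2:
  fixes p q s D dd a b e1 e2 c g t \<rho> :: real
  assumes "p \<ge> a" "q \<ge> b" "s = 1 - D" "D \<le> dd" "p + q + s \<le> 1" "q \<ge> 0" "s \<ge> 0" "p \<ge> 0" "e3 \<ge> 0"
    "e2 \<ge> g - t" "e1 \<ge> c - t" "t \<ge> 0" "b*c - dd*g \<ge> 0" "c \<ge> 0" "g \<ge> 0" "1 - a \<le> \<rho>"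
  shows "p * e3 + q * e1 + s * e2 \<ge> g - \<rho> * t"
proof -
  have h1: "q * e1 \<ge> q * c - q * t" using assms mult_left_mono[of "c - t" e1 q] by (simp add: algebra_simps)
  have h2: "s * e2 \<ge> s * g - s * t" using assms mult_left_mono[of "g - t" e2 s] by (simp add: algebra_simps)
  have h3: "q * c \<ge> b * c" using assms by (simp add: mult_right_mono)
  have h4: "s * g = g - D * g" unfolding assms(3) by (simp add: algebra_simps)
  have h5: "D * g \<le> dd * g" using assms by (simp add: mult_right_mono)
  have h6: "q * t + s * t \<le> \<rho> * t" using assms mult_right_mono[of "q + s" \<rho> t] by (simp add: algebra_simps)
  have h7: "p * e3 \<ge> 0" using assms by simp
  show ?thesis using h1 h2 h3 h4 h5 h6 h7 assms(13) by linarith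
qed

lemma numA:
  fixes r L Mm :: real
  assumes r: "r > 1" and L: "L \<ge> 1" and Mm: "Mm \<ge> 1"
  defines "\<epsilon> \<equiv> 1 / (L * Mm)"
  defines "c \<equiv> 1 / (26 * r^2 * L)"
  defines "M \<equiv> Mm - 1 + r + \<epsilon>"
  defines "g \<equiv> c * (Mm - 1) / M"
  shows "\<epsilon> + r * g - (r + \<epsilon>) * c \<ge> 0"
proof -
  have e0: "\<epsilon> > 0" "\<epsilon> \<le> 1" proof -
    have "L * Mm \<ge> 1 * 1" using L Mm by (intro mult_mono) auto
    then show "\<epsilon> > 0" "\<epsilon> \<le> 1" by (auto simp: \<epsilon>_def field_simps)
  qed
  have MM: "M \<ge> Mm" using e0 r by (simp add: M_def)
  have Mpos: "M > 0" using MM Mm by simp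
  have c0: "c > 0" using r L by (simp add: c_def)
  have c26: "c \<le> 1/26"
  proof -
    have "r^2 * L \<ge> 1 * 1" using r L by (intro mult_mono) (auto simp: one_le_power)
    then show ?thesis unfolding c_def by (simp add: field_simps)
  qed
  have rg: "r * g = r * c - r * c * (r + \<epsilon>) / M"
    using Mpos by (simp add: g_def M_def field_simps)
  have k1: "\<epsilon> * c \<le> \<epsilon> / 26" using c26 e0 by (simp add: mult_left_mono)
  have k2: "r * c * (r + \<epsilon>) / M \<le> 25 * \<epsilon> / 26"
  proof -
    have "r * c * (r + \<epsilon>) / M = (r + \<epsilon>) / (26 * r * L * M)"
      using r L by (simp add: c_def power2_eq_square field_simps)
    also have "\<dots> \<le> (2 * r) / (26 * r * L * Mm)"
    proof (rule frac_le)
      show "0 \<le> 2 * r" using r by simp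
      show "r + \<epsilon> \<le> 2 * r" using e0 r by simp
      show "0 < 26 * r * L * Mm" using r L Mm by simp
      show "26 * r * L * Mm \<le> 26 * r * L * M" using MM r L by simp
    qed
    also have "\<dots> = 2 / 26 * \<epsilon>" using r by (simp add: \<epsilon>_def field_simps)
    also have "\<dots> \<le> 25 * \<epsilon> / 26" using e0 by simp
    finally show ?thesis .
  qed
  have "(r + \<epsilon>) * c = r * c + \<epsilon> * c" by (simp add: algebra_simps)
  then show ?thesis using rg k1 k2 by linarith
qed




context
  fixes k l m i j :: nat and r :: real
  assumes k: "0 < k" and l: "0 < l" and m: "0 < m" and r: "1 < r" and i: "i < l" and j: "j < m"
begin

lemma main: "moran_extinction (megastar_V k l m) (megastar_E k l m) r {Res i j} \<ge> 1 / (26 * r^2 * real l)"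
proof -
  have G: "mgen (megastar_V k l m) (megastar_E k l m) r" by (rule G[OF k l m r i j])
  define e where "e n S = moran_ext_within (megastar_V k l m) (megastar_E k l m) r n S" for n S
  define tr where "tr S S' = moran_trans (megastar_V k l m) (megastar_E k l m) r S S'" for S S'
  define S1 where "S1 = {Res i j}"
  define S2 where "S2 = {Feeder i, Res i j}"
  define S3 where "S3 = {Feeder i}"
  define W1 where "W1 = total_fitness (megastar_V k l m) r S1"
  define W2 where "W2 = total_fitness (megastar_V k l m) r S2"
  define \<epsilon> where "\<epsilon> = 1 / (real l * real m)"
  define c where "c = 1 / (26 * r^2 * real l)"
  define M where "M = real m - 1 + r + \<epsilon>"
  define g where "g = c * (real m - 1) / M"
  define \<rho> where "\<rho> = max 0 (max (1 - \<epsilon> / W1) (1 - \<epsilon> / W2))"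
  have W1: "W1 > 0" unfolding W1_def by (rule mgen.tf_pos[OF G])
  have W2: "W2 > 0" unfolding W2_def by (rule mgen.tf_pos[OF G])
  have e0: "\<epsilon> > 0" using l m by (simp add: \<epsilon>_def)
  have rho1: "\<rho> < 1" using e0 W1 W2 by (simp add: \<rho>_def)
  have rho0: "\<rho> \<ge> 0" by (simp add: \<rho>_def)
  have Mpos: "M \<ge> real m" using e0 r by (simp add: M_def)
  have c0: "c > 0" using r l by (simp add: c_def)
  have c1: "c \<le> 1"
  proof -
    have "r^2 * real l \<ge> 1 * 1" using r l by (intro mult_mono) (auto simp: one_le_power)
    then show ?thesis unfolding c_def by (simp add: field_simps)
  qed
  have g0: "g \<ge> 0" using c0 m Mpos by (simp add: g_def)
  have gc: "g \<le> c"
  proof -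
    have "(real m - 1) / M \<le> 1" using Mpos m by simp
    then have "c * ((real m - 1) / M) \<le> c * 1" using c0 by (intro mult_left_mono) auto
    then show ?thesis by (simp add: g_def)
  qed
  have A: "\<epsilon> + r * g - (r + \<epsilon>) * c \<ge> 0"
    unfolding g_def M_def c_def \<epsilon>_def by (rule numA) (use r l m in auto)
  have B: "(real m - 1) * c - M * g = 0" using Mpos m by (simp add: g_def)
  have T1: "tr S1 {} \<ge> (1 / W1) * \<epsilon>"
    using T1[OF k l m r i j] by (simp add: tr_def S1_def W1_def \<epsilon>_def)
  have T2: "tr S1 S2 \<ge> r / W1"
    using T2[OF k l m r i j] by (simp add: tr_def S1_def S2_def W1_def)
  have T3: "mgen.DD (megastar_V k l m) (megastar_E k l m) r S1 \<le> (r + \<epsilon>) / W1"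
    using T3[OF k l m r i j] by (simp add: S1_def W1_def \<epsilon>_def)
  have T4: "tr S2 S1 \<ge> (real m - 1) / W2"
    using T4[OF k l m r i j] by (simp add: tr_def S1_def S2_def W2_def)
  have T5: "mgen.DD (megastar_V k l m) (megastar_E k l m) r S2 \<le> M / W2"
    using T5[OF k l m r i j] by (simp add: S2_def W2_def \<epsilon>_def M_def)
  have T6: "tr S2 S3 \<ge> (1 / W2) * \<epsilon>"
    using T6[OF k l m r i j] by (simp add: tr_def S2_def S3_def W2_def \<epsilon>_def)
  have st1: "tr S1 S1 = 1 - mgen.DD (megastar_V k l m) (megastar_E k l m) r S1"
    unfolding tr_def by (rule mgen.stay[OF G])
  have st2: "tr S2 S2 = 1 - mgen.DD (megastar_V k l m) (megastar_E k l m) r S2"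
    unfolding tr_def by (rule mgen.stay[OF G])
  have trn: "\<And>S S'. tr S S' \<ge> 0" unfolding tr_def by (rule mgen.trans_nonneg[OF G])
  have en: "\<And>n S. e n S \<ge> 0" unfolding e_def using mgen.ext_bounds[OF G] by blast
  have e1: "\<And>n S. e n S \<le> 1" unfolding e_def using mgen.ext_bounds[OF G] by blast
  have eE: "\<And>n. e n {} = 1" unfolding e_def by (rule mgen.ext_empty[OF G])
  have inV: "{{}, S1, S2} \<subseteq> Pow (megastar_V k l m)" "{S3, S1, S2} \<subseteq> Pow (megastar_V k l m)"
    using xV[OF k l m r i j] aV[OF k l m r i j] by (auto simp: S1_def S2_def S3_def)
  have d: "S1 \<noteq> {}" "S2 \<noteq> {}" "S1 \<noteq> S2" "S3 \<noteq> S1" "S3 \<noteq> S2"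
    by (auto simp: S1_def S2_def S3_def doubleton_eq_iff)
  have claim: "e n S1 \<ge> c - \<rho>^n \<and> e n S2 \<ge> g - \<rho>^n" for n
  proof (induction n)
    case 0
    then show ?case using en[of 0 S1] en[of 0 S2] c1 gc by simp
  next
    case (Suc n)
    have sum1: "(\<Sum>S'\<in>{{}, S1, S2}. tr S1 S' * e n S') = tr S1 {} * 1 + tr S1 S2 * e n S2 + tr S1 S1 * e n S1"
      using d eE by simp
    have sum1': "(\<Sum>S'\<in>{{}, S1, S2}. tr S1 S') = tr S1 {} + tr S1 S2 + tr S1 S1"
      using d by simp
    have le1: "(\<Sum>S'\<in>{{}, S1, S2}. tr S1 S' * e n S') \<le> e (Suc n) S1"
      unfolding tr_def e_def by (rule mgen.ext_ge_sub[OF G inV(1)])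
    have r1: "(\<Sum>S'\<in>{{}, S1, S2}. tr S1 S') \<le> 1"
      unfolding tr_def by (rule mgen.row_sub[OF G inV(1)])
    have a1: "(1 / W1) * \<epsilon> + (r / W1) * g - ((r + \<epsilon>) / W1) * c \<ge> 0"
    proof -
      have "(1 / W1) * \<epsilon> + (r / W1) * g - ((r + \<epsilon>) / W1) * c = (\<epsilon> + r * g - (r + \<epsilon>) * c) / W1"
        using W1 by (simp add: field_simps)
      then show ?thesis using A W1 by simp
    qed
    have p1: "1 - (1 / W1) * \<epsilon> \<le> \<rho>" by (simp add: \<rho>_def)
    have "c - \<rho> * \<rho>^n \<le> tr S1 {} * 1 + tr S1 S2 * e n S2 + tr S1 S1 * e n S1"
      by (rule step1[OF T1 T2 st1 T3 _ trn _ _ _ _ a1 _ g0 p1])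
         (use sum1' r1 trn Suc c0 rho0 in auto)
    then have X1: "c - \<rho>^Suc n \<le> e (Suc n) S1" using sum1 le1 by simp
    have sum2: "(\<Sum>S'\<in>{S3, S1, S2}. tr S2 S' * e n S') = tr S2 S3 * e n S3 + tr S2 S1 * e n S1 + tr S2 S2 * e n S2"
      using d by (simp add: add.assoc)
    have sum2': "(\<Sum>S'\<in>{S3, S1, S2}. tr S2 S') = tr S2 S3 + tr S2 S1 + tr S2 S2"
      using d by (simp add: add.assoc)
    have le2: "(\<Sum>S'\<in>{S3, S1, S2}. tr S2 S' * e n S') \<le> e (Suc n) S2"
      unfolding tr_def e_def by (rule mgen.ext_ge_sub[OF G inV(2)])
    have r2: "(\<Sum>S'\<in>{S3, S1, S2}. tr S2 S') \<le> 1"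
      unfolding tr_def by (rule mgen.row_sub[OF G inV(2)])
    have b2: "((real m - 1) / W2) * c - (M / W2) * g \<ge> 0"
    proof -
      have "((real m - 1) / W2) * c - (M / W2) * g = ((real m - 1) * c - M * g) / W2"
        using W2 by (simp add: field_simps)
      then show ?thesis using B by simp
    qed
    have p2: "1 - (1 / W2) * \<epsilon> \<le> \<rho>" by (simp add: \<rho>_def)
    have "g - \<rho> * \<rho>^n \<le> tr S2 S3 * e n S3 + tr S2 S1 * e n S1 + tr S2 S2 * e n S2"
      by (rule step2[OF T6 T4 st2 T5 _ trn _ trn en _ _ _ b2 _ g0 p2])
         (use sum2' r2 trn Suc c0 rho0 in auto)
    then have X2: "g - \<rho>^Suc n \<le> e (Suc n) S2" using sum2 le2 by simp
    show ?case using X1 X2 by simp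
  qed
  have bdd: "bdd_above (range (\<lambda>n. e n S1))" by (rule bdd_aboveI2[where M=1]) (rule e1)
  show ?thesis
  proof (rule ccontr)
    assume "\<not> ?thesis"
    then have lt: "(SUP n. e n S1) < c" by (simp add: moran_extinction_def e_def S1_def c_def)
    obtain n where n: "\<rho>^n < c - (SUP n. e n S1)" using real_arch_pow_inv[OF _ rho1, of "c - (SUP n. e n S1)"] lt by auto
    have "e n S1 \<le> (SUP n. e n S1)" using bdd by (rule cSUP_upper[rotated]) simp
    then show False using claim[of n] n by linarith
  qed
qed

end


theorem lemma7p2:
  fixes r :: real and k l m i j :: nat
  assumes "r > 1" and "k > 0" and "l > 0" and "m > 0"
    and "real m \<ge> 12 * r"
    and "i < l" and "j < m"
  shows "moran_extinction (megastar_V k l m) (megastar_E k l m) r {Res i j}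
           \<ge> 1 / (26 * r^2 * real l)"
  using main[OF assms(2,3,4,1,6,7)] .

end
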